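(* Let $U,W$ be Hilbert spaces, $T: U\rightrightarrows U$, $(\hat u,\hat w)\in\operatorname{graph}T$, $\Xi,N,M\in\mathcal{L}(U;U)$ with $M\ge0$, and $\alpha>0$. Suppose: (i) $N=A^*B$ for some $A,B\in\mathcal{L}(U;W)$; (ii) $\Xi_\alpha:=\alpha^{-1}\Xi-\alpha^{-2}A^*A/4 \le \min\{1,\alpha^{-1}\}M$; (iii) $(M,M-\Xi_\alpha)\in\mathcal{P}(T^{-1}(\hat w),\hat u)$ when $\alpha\in(0,1)$. Then $T$ is $(\Xi_\alpha, B^*B, M)$-partially subregular at $(\hat u,\hat w)$ if it is $(\Xi,N,M)$-partially strongly submonotone at this point. If (iii) does not hold (but (i) and (ii) do), $(\Xi,N,M)$-partial strong submonotonicity at $(\hat u,\hat w)$ still implies $(\alpha\Xi_\alpha,\alpha B^*B,M)$-partial subregularity there.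
   Context: For $T\in\mathcal{L}(U;U)$: $\langle x,z\rangle_T:=\langle Tx,z\rangle$, $\|x\|^2_T:=\langle Tx,x\rangle$, $\operatorname{dist}^2_T(z,A):=\inf_{u\in A}\|z-u\|^2_T$ ($\inf\emptyset=+\infty$); $T\ge S$ means $T-S$ positive semidefinite. Partial strong submonotonicity: for $\Xi,N,M$ with $M\ge0$, $T$ is $(\Xi,N,M)$-partially strongly submonotone at $(\hat u,\hat w)$ if there is a neighbourhood $\mathcal{U}\ni\hat u$ with $\inf_{u^*\in T^{-1}(\hat w)}(\langle w-\hat w,u-u^*\rangle_N+\|u-u^*\|^2_{M-\Xi})\ge\operatorname{dist}^2_M(u,T^{-1}(\hat w))$ for all $u\in\mathcal{U}$, $w\in T(u)$. Partial subregularity: for $M,P,N$ with $N\ge0$, $M\ge0$, $M\ge P$, $T$ is $(P,N,M)$-partially subregular at $(\hat u,\hat w)$ if there is a neighbourhood $\mathcal{U}\ni\hat u$ with $\operatorname{dist}^2_N(\hat w,T(u))+\operatorname{dist}^2_{M-P}(u,T^{-1}(\hat w))\ge\operatorname{dist}^2_M(u,T^{-1}(\hat w))$ for all $u\in\mathcal{U}$. $(M,M')\in\mathcal{P}(A,\hat u)$ means there is a neighbourhood $\mathcal{U}'\ni\hat u$ such that each $u\in\mathcal{U}'$ has a common projection onto $A$ with respect to $\|\cdot\|_M$ and $\|\cdot\|_{M'}$. *)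

theory Defs
  imports "HOL-Analysis.Analysis"
begin

text \<open>Operators T in L(U;U) are represented as bounded linear functions.
  Weighted inner product, squared seminorm and squared distance.\<close>

definition wip :: "('u::real_inner \<Rightarrow> 'u) \<Rightarrow> 'u \<Rightarrow> 'u \<Rightarrow> real" where
  "wip T x z = inner (T x) z"

definition wnorm2 :: "('u::real_inner \<Rightarrow> 'u) \<Rightarrow> 'u \<Rightarrow> real" where
  "wnorm2 T x = inner (T x) x"

text \<open>Squared distance with values in ereal, so that the infimum over the empty set is +infinity.\<close>
definition wdist2 :: "('u::real_inner \<Rightarrow> 'u) \<Rightarrow> 'u \<Rightarrow> 'u set \<Rightarrow> ereal" where
  "wdist2 T z A = (INF u\<in>A. ereal (wnorm2 T (z - u)))"

definition psd :: "('u::real_inner \<Rightarrow> 'u) \<Rightarrow> bool" where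
  "psd T \<longleftrightarrow> (\<forall>x. 0 \<le> inner (T x) x)"

definition op_ge :: "('u::real_inner \<Rightarrow> 'u) \<Rightarrow> ('u \<Rightarrow> 'u) \<Rightarrow> bool" where
  "op_ge T S \<longleftrightarrow> psd (\<lambda>x. T x - S x)"

definition op_diff :: "('u::real_inner \<Rightarrow> 'u) \<Rightarrow> ('u \<Rightarrow> 'u) \<Rightarrow> ('u \<Rightarrow> 'u)" where
  "op_diff T S = (\<lambda>x. T x - S x)"

definition is_adjoint :: "('u::real_inner \<Rightarrow> 'w::real_inner) \<Rightarrow> ('w \<Rightarrow> 'u) \<Rightarrow> bool" where
  "is_adjoint A As \<longleftrightarrow> (\<forall>x w. inner (A x) w = inner x (As w))"

definition inv_img :: "('u \<Rightarrow> 'v set) \<Rightarrow> 'v \<Rightarrow> 'u set" where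
  "inv_img T w = {u. w \<in> T u}"

definition partially_strongly_submonotone ::
  "('u::real_inner \<Rightarrow> 'u set) \<Rightarrow> ('u \<Rightarrow> 'u) \<Rightarrow> ('u \<Rightarrow> 'u) \<Rightarrow> ('u \<Rightarrow> 'u) \<Rightarrow> 'u \<Rightarrow> 'u \<Rightarrow> bool" where
  "partially_strongly_submonotone T Xi N M uh wh \<longleftrightarrow>
     psd M \<and>
     (\<exists>UU. open UU \<and> uh \<in> UU \<and>
        (\<forall>u\<in>UU. \<forall>w\<in>T u.
           (INF us\<in>inv_img T wh. ereal (wip N (w - wh) (u - us) + wnorm2 (op_diff M Xi) (u - us)))
             \<ge> wdist2 M u (inv_img T wh)))"

definition partially_subregular ::
  "('u::real_inner \<Rightarrow> 'u set) \<Rightarrow> ('u \<Rightarrow> 'u) \<Rightarrow> ('u \<Rightarrow> 'u) \<Rightarrow> ('u \<Rightarrow> 'u) \<Rightarrow> 'u \<Rightarrow> 'u \<Rightarrow> bool" where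
  "partially_subregular T P N M uh wh \<longleftrightarrow>
     psd N \<and> psd M \<and> op_ge M P \<and>
     (\<exists>UU. open UU \<and> uh \<in> UU \<and>
        (\<forall>u\<in>UU. wdist2 N wh (T u) + wdist2 (op_diff M P) u (inv_img T wh)
                  \<ge> wdist2 M u (inv_img T wh)))"

definition is_wproj :: "('u::real_inner \<Rightarrow> 'u) \<Rightarrow> 'u set \<Rightarrow> 'u \<Rightarrow> 'u \<Rightarrow> bool" where
  "is_wproj M A u p \<longleftrightarrow> p \<in> A \<and> (\<forall>a\<in>A. wnorm2 M (u - p) \<le> wnorm2 M (u - a))"

definition common_proj :: "('u::real_inner \<Rightarrow> 'u) \<Rightarrow> ('u \<Rightarrow> 'u) \<Rightarrow> 'u set \<Rightarrow> 'u \<Rightarrow> bool" where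
  "common_proj M M' A uh \<longleftrightarrow>
     (\<exists>UU. open UU \<and> uh \<in> UU \<and> (\<forall>u\<in>UU. \<exists>p. is_wproj M A u p \<and> is_wproj M' A u p))"

end

theory Submission
  imports Defs
begin

lemma L1:
  fixes F :: "'a \<Rightarrow> ereal"
  assumes h: "\<And>x. x \<in> X \<Longrightarrow> D \<le> F x + Z" and z: "0 \<le> Z"
    and f: "\<And>x. x \<in> X \<Longrightarrow> 0 \<le> F x"
  shows "D \<le> (INF x\<in>X. F x) + Z"
proof (cases "X = {}")
  case True
  then show ?thesis using z by (cases Z) (auto simp: top_ereal_def)
next
  case False
  have zz: "Z \<noteq> -\<infinity>" using z by auto
  have "D \<le> (INF x\<in>X. F x + Z)" by (rule INF_greatest) (rule h)
  also have "\<dots> = (INF x\<in>X. F x) + Z"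
    by (rule INF_ereal_add_left[OF False zz f])
  finally show ?thesis .
qed

lemma L2:
  fixes f :: "'a \<Rightarrow> real" and g :: "'b \<Rightarrow> real"
  assumes h: "\<And>x y. x \<in> X \<Longrightarrow> y \<in> Y \<Longrightarrow> D \<le> ereal (f x) + ereal (g y)"
    and f: "\<And>x. x \<in> X \<Longrightarrow> 0 \<le> f x" and g: "\<And>y. y \<in> Y \<Longrightarrow> 0 \<le> g y"
  shows "D \<le> (INF x\<in>X. ereal (f x)) + (INF y\<in>Y. ereal (g y))"
proof (rule L1)
  show "0 \<le> (INF y\<in>Y. ereal (g y))" by (rule INF_greatest) (simp add: g)
  show "0 \<le> ereal (f x)" if "x \<in> X" for x using f that by simp
  fix x assume x: "x \<in> X"
  have "D \<le> (INF y\<in>Y. ereal (g y)) + ereal (f x)"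
    by (rule L1) (use h[OF x] f[OF x] g in \<open>auto simp: add.commute\<close>)
  then show "D \<le> ereal (f x) + (INF y\<in>Y. ereal (g y))" by (simp add: add.commute)
qed

lemma young:
  fixes b a :: "'w::real_inner" and \<alpha> :: real
  assumes "\<alpha> > 0"
  shows "inner b a \<le> \<alpha> * inner b b + inner a a / (4 * \<alpha>)"
proof -
  have "0 \<le> inner ((2*\<alpha>) *\<^sub>R b - a) ((2*\<alpha>) *\<^sub>R b - a)" by simp
  also have "\<dots> = 4*\<alpha>\<^sup>2 * inner b b - 4*\<alpha> * inner b a + inner a a"
    by (simp add: inner_diff_left inner_diff_right inner_commute power2_eq_square algebra_simps)
  finally have "4*\<alpha> * inner b a \<le> 4*\<alpha> * (\<alpha> * inner b b + inner a a / (4 * \<alpha>))"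
    using assms by (simp add: algebra_simps power2_eq_square)
  then show ?thesis using assms by simp
qed

lemma R1:
  fixes \<alpha> d nb na q x :: real
  assumes a: "1 \<le> \<alpha>" and h1: "d \<le> \<alpha>*nb + na/(4*\<alpha>) + q - x" and h2: "d \<le> q"
  shows "d \<le> nb + (q - (x/\<alpha> - na/(4*\<alpha>\<^sup>2)))"
proof -
  have "(\<alpha>-1)*d \<le> (\<alpha>-1)*q" using a h2 by (simp add: mult_left_mono)
  then have e1: "\<alpha>*d - d \<le> \<alpha>*q - q" by (simp add: algebra_simps)
  have E: "\<alpha>*(nb + (q - (x/\<alpha> - na/(4*\<alpha>\<^sup>2)))) = \<alpha>*nb + \<alpha>*q - x + na/(4*\<alpha>)"
    using a by (simp add: field_simps power2_eq_square)
  have "\<alpha>*d \<le> \<alpha>*(nb + (q - (x/\<alpha> - na/(4*\<alpha>\<^sup>2))))"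
    unfolding E using h1 e1 by linarith
  then show ?thesis using a by simp
qed
lemma R2:
  fixes \<alpha> b nb na q x :: real
  assumes a: "0 < \<alpha>" and h1: "q \<le> b + q - x" and h2: "b \<le> \<alpha>*nb + na/(4*\<alpha>)"
  shows "q \<le> nb + (q - (x/\<alpha> - na/(4*\<alpha>\<^sup>2)))"
proof -
  have E: "\<alpha>*(x/\<alpha> - na/(4*\<alpha>\<^sup>2)) = x - na/(4*\<alpha>)"
    using a by (simp add: field_simps power2_eq_square)
  have "\<alpha>*(x/\<alpha> - na/(4*\<alpha>\<^sup>2)) \<le> \<alpha> * nb"
    unfolding E using h1 h2 by linarith
  then have "x/\<alpha> - na/(4*\<alpha>\<^sup>2) \<le> nb" using a by simp
  then show ?thesis by simp
qed

theorem lemma4p9: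
  fixes T :: "'u::{real_inner,complete_space} \<Rightarrow> 'u set"
    and uh wh :: 'u
    and Xi N M :: "'u \<Rightarrow> 'u"
    and A B :: "'u \<Rightarrow> 'w::{real_inner,complete_space}"
    and As Bs :: "'w \<Rightarrow> 'u"
    and \<alpha> :: real
  assumes graph: "wh \<in> T uh"
    and lin: "bounded_linear Xi" "bounded_linear N" "bounded_linear M"
    and linAB: "bounded_linear A" "bounded_linear B"
    and adjA: "is_adjoint A As" and adjB: "is_adjoint B Bs"
    and Mpos: "psd M"
    and alpha: "\<alpha> > 0"
    and i: "N = (\<lambda>x. As (B x))"
    and ii: "op_ge (\<lambda>x. min 1 (1 / \<alpha>) *\<^sub>R M x)
                   (\<lambda>x. (1 / \<alpha>) *\<^sub>R Xi x - (1 / (4 * \<alpha>\<^sup>2)) *\<^sub>R As (A x))"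
    and pssm: "partially_strongly_submonotone T Xi N M uh wh"
  shows "((\<alpha> < 1 \<longrightarrow>
            common_proj M (op_diff M (\<lambda>x. (1 / \<alpha>) *\<^sub>R Xi x - (1 / (4 * \<alpha>\<^sup>2)) *\<^sub>R As (A x)))
                        (inv_img T wh) uh)
          \<longrightarrow> partially_subregular T
                (\<lambda>x. (1 / \<alpha>) *\<^sub>R Xi x - (1 / (4 * \<alpha>\<^sup>2)) *\<^sub>R As (A x))
                (\<lambda>x. Bs (B x)) M uh wh)
       \<and> partially_subregular T
                (\<lambda>x. \<alpha> *\<^sub>R ((1 / \<alpha>) *\<^sub>R Xi x - (1 / (4 * \<alpha>\<^sup>2)) *\<^sub>R As (A x)))
                (\<lambda>x. \<alpha> *\<^sub>R Bs (B x)) M uh wh"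
proof -
  define XA where "XA = (\<lambda>x. (1 / \<alpha>) *\<^sub>R Xi x - (1 / (4 * \<alpha>\<^sup>2)) *\<^sub>R As (A x))"
  define S where "S = inv_img T wh"
  define qM where "qM v = inner (M v) v" for v
  define qX where "qX v = inner (Xi v) v" for v
  define na where "na v = inner (A v) (A v)" for v
  define nb where "nb x = inner (B x) (B x)" for x
  have qM0: "0 \<le> qM v" for v using Mpos by (simp add: psd_def qM_def)
  have nb0: "0 \<le> nb x" for x by (simp add: nb_def)
  have na0: "0 \<le> na x" for x by (simp add: na_def)
  have AsA: "inner (As (A v)) v = na v" for v
    using adjA by (simp add: is_adjoint_def na_def inner_commute)
  have BsB: "inner (Bs (B v)) v = nb v" for v
    using adjB by (simp add: is_adjoint_def nb_def inner_commute)
  have wipN: "wip N x v = inner (B x) (A v)" for x v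
    using adjA unfolding is_adjoint_def wip_def i by (metis inner_commute)
  have qXA: "inner (XA v) v = qX v / \<alpha> - na v / (4 * \<alpha>\<^sup>2)" for v
    by (simp add: XA_def inner_diff_left AsA qX_def)
  have wdM: "wnorm2 (op_diff M P) v = qM v - inner (P v) v" for P v
    by (simp add: wnorm2_def op_diff_def inner_diff_left qM_def)
  have nbsym: "nb (wh - w) = nb (w - wh)" for w
  proof -
    have "B (wh - w) = - B (w - wh)"
      using linear_diff[OF bounded_linear.linear[OF linAB(2)]] by (metis minus_diff_eq)
    then show ?thesis by (simp add: nb_def)
  qed
  have iiR: "qX v / \<alpha> - na v / (4 * \<alpha>\<^sup>2) \<le> min 1 (1 / \<alpha>) * qM v" for v
    using ii unfolding op_ge_def psd_def
    by (drule_tac x=v in spec) (simp add: inner_diff_left AsA qX_def qM_def)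
  have geXA: "qX v / \<alpha> - na v / (4 * \<alpha>\<^sup>2) \<le> qM v" for v
  proof -
    have "min 1 (1 / \<alpha>) * qM v \<le> 1 * qM v"
      by (rule mult_right_mono) (auto simp: qM0)
    then show ?thesis using iiR[of v] by simp
  qed
  have geaXA: "\<alpha> * (qX v / \<alpha> - na v / (4 * \<alpha>\<^sup>2)) \<le> qM v" for v
  proof -
    have "\<alpha> * (qX v / \<alpha> - na v / (4 * \<alpha>\<^sup>2)) \<le> \<alpha> * (min 1 (1 / \<alpha>) * qM v)"
      using iiR[of v] alpha by (simp add: mult_left_mono)
    also have "\<dots> = (\<alpha> * min 1 (1 / \<alpha>)) * qM v" by simp
    also have "\<dots> \<le> 1 * qM v"
    proof (rule mult_right_mono)
      show "\<alpha> * min 1 (1 / \<alpha>) \<le> 1" using alpha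
        by (cases "\<alpha> \<le> 1") (auto simp: min_def)
    qed (simp add: qM0)
    finally show ?thesis by simp
  qed
  from pssm obtain U1 where U1: "open U1" "uh \<in> U1"
    and H: "\<And>u w. u \<in> U1 \<Longrightarrow> w \<in> T u \<Longrightarrow>
      (INF us\<in>S. ereal (wip N (w - wh) (u - us) + wnorm2 (op_diff M Xi) (u - us))) \<ge> wdist2 M u S"
    unfolding partially_strongly_submonotone_def S_def by blast
  have P1: "wdist2 M u S \<le> ereal (inner (B (w - wh)) (A (u - s)) + qM (u - s) - qX (u - s))"
    if "u \<in> U1" "w \<in> T u" "s \<in> S" for u w s
  proof -
    have "wdist2 M u S \<le> (INF us\<in>S. ereal (wip N (w - wh) (u - us) + wnorm2 (op_diff M Xi) (u - us)))"
      using H that by blast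
    also have "\<dots> \<le> ereal (wip N (w - wh) (u - s) + wnorm2 (op_diff M Xi) (u - s))"
      by (rule INF_lower) fact
    finally show ?thesis by (simp add: wipN wdM qX_def add_diff_eq)
  qed
  have P0: "wdist2 M u S \<le> ereal (qM (u - s))" if "s \<in> S" for u s
    unfolding wdist2_def by (rule INF_lower2[OF that]) (simp add: wnorm2_def qM_def)
  have Y: "inner (B x) (A v) \<le> \<alpha> * nb x + na v / (4 * \<alpha>)" for x v
    using young[OF alpha, of "B x" "A v"] by (simp add: nb_def na_def)
  have part2: "partially_subregular T (\<lambda>x. \<alpha> *\<^sub>R XA x) (\<lambda>x. \<alpha> *\<^sub>R Bs (B x)) M uh wh"
    unfolding partially_subregular_def
  proof (intro conjI)
    show "psd (\<lambda>x. \<alpha> *\<^sub>R Bs (B x))" using alpha nb0 by (simp add: psd_def BsB)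
    show "psd M" by fact
    show "op_ge M (\<lambda>x. \<alpha> *\<^sub>R XA x)" using geaXA
      by (simp add: op_ge_def psd_def inner_diff_left qXA qM_def)
    show "\<exists>UU. open UU \<and> uh \<in> UU \<and> (\<forall>u\<in>UU. wdist2 (\<lambda>x. \<alpha> *\<^sub>R Bs (B x)) wh (T u) +
        wdist2 (op_diff M (\<lambda>x. \<alpha> *\<^sub>R XA x)) u (inv_img T wh) \<ge> wdist2 M u (inv_img T wh))"
    proof (intro exI conjI ballI)
      fix u assume u: "u \<in> U1"
      have "wdist2 M u S \<le> (INF w\<in>T u. ereal (\<alpha> * nb (wh - w))) +
           (INF s\<in>S. ereal (qM (u - s) - \<alpha> * (qX (u - s) / \<alpha> - na (u - s) / (4 * \<alpha>\<^sup>2))))"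
      proof (rule L2)
        fix w s assume w: "w \<in> T u" and s: "s \<in> S"
        have "inner (B (w - wh)) (A (u - s)) + qM (u - s) - qX (u - s) \<le>
            \<alpha> * nb (wh - w) + (qM (u - s) - \<alpha> * (qX (u - s) / \<alpha> - na (u - s) / (4 * \<alpha>\<^sup>2)))"
          using Y[of "w - wh" "u - s"] alpha
          by (simp add: nbsym algebra_simps power2_eq_square)
        then show "wdist2 M u S \<le> ereal (\<alpha> * nb (wh - w)) +
             ereal (qM (u - s) - \<alpha> * (qX (u - s) / \<alpha> - na (u - s) / (4 * \<alpha>\<^sup>2)))"
          using P1[OF u w s] by (metis order_trans ereal_less_eq(3) plus_ereal.simps(1))
      qed (use alpha nb0 geaXA in auto)
      then show "wdist2 (\<lambda>x. \<alpha> *\<^sub>R Bs (B x)) wh (T u) +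
        wdist2 (op_diff M (\<lambda>x. \<alpha> *\<^sub>R XA x)) u (inv_img T wh) \<ge> wdist2 M u (inv_img T wh)"
        by (simp add: wdist2_def wdM qXA BsB S_def[symmetric] wnorm2_def[of "\<lambda>x. \<alpha> *\<^sub>R Bs (B x)"])
    qed (use U1 in auto)
  qed

  have base: "psd (\<lambda>x. Bs (B x))" "op_ge M XA"
    using nb0 geXA by (simp_all add: psd_def BsB op_ge_def inner_diff_left qXA qM_def)
  have part1: "(\<alpha> < 1 \<longrightarrow> common_proj M (op_diff M XA) S uh) \<longrightarrow>
      partially_subregular T XA (\<lambda>x. Bs (B x)) M uh wh"
  proof
    assume hyp: "\<alpha> < 1 \<longrightarrow> common_proj M (op_diff M XA) S uh"
    show "partially_subregular T XA (\<lambda>x. Bs (B x)) M uh wh"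
    proof (cases "\<alpha> < 1")
      case True
      with hyp obtain U2 where U2: "open U2" "uh \<in> U2"
        and PR: "\<And>u. u \<in> U2 \<Longrightarrow> \<exists>p. is_wproj M S u p \<and> is_wproj (op_diff M XA) S u p"
        unfolding common_proj_def by blast
      show ?thesis unfolding partially_subregular_def
      proof (intro conjI base Mpos exI[of _ "U1 \<inter> U2"] ballI)
        show "open (U1 \<inter> U2)" using U1 U2 by auto
        show "uh \<in> U1 \<inter> U2" using U1 U2 by auto
        fix u assume u: "u \<in> U1 \<inter> U2"
        then obtain p where p1: "is_wproj M S u p" and p2: "is_wproj (op_diff M XA) S u p"
          using PR by blast
        have pS: "p \<in> S" using p1 by (simp add: is_wproj_def)
        have dM: "wdist2 M u S = ereal (qM (u - p))"
        proof (rule antisym)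
          show "wdist2 M u S \<le> ereal (qM (u - p))" by (rule P0[OF pS])
          show "ereal (qM (u - p)) \<le> wdist2 M u S"
            unfolding wdist2_def using p1
            by (intro INF_greatest) (simp add: is_wproj_def wnorm2_def qM_def)
        qed
        have dX: "wdist2 (op_diff M XA) u S = ereal (wnorm2 (op_diff M XA) (u - p))"
        proof (rule antisym)
          show "wdist2 (op_diff M XA) u S \<le> ereal (wnorm2 (op_diff M XA) (u - p))"
            unfolding wdist2_def by (rule INF_lower2[OF pS]) simp
          show "ereal (wnorm2 (op_diff M XA) (u - p)) \<le> wdist2 (op_diff M XA) u S"
            unfolding wdist2_def using p2
            by (intro INF_greatest) (simp add: is_wproj_def)
        qed
        have "wdist2 M u S \<le> (INF w\<in>T u. ereal (nb (wh - w))) +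
            ereal (qM (u - p) - (qX (u - p) / \<alpha> - na (u - p) / (4 * \<alpha>\<^sup>2)))"
        proof (rule L1)
          fix w assume w: "w \<in> T u"
          have h1: "qM (u - p) \<le> inner (B (w - wh)) (A (u - p)) + qM (u - p) - qX (u - p)"
            using P1[of u w p] u w pS unfolding dM by simp
          have "qM (u - p) \<le> nb (wh - w) + (qM (u - p) - (qX (u - p) / \<alpha> - na (u - p) / (4 * \<alpha>\<^sup>2)))"
            using R2[OF alpha h1 Y[of "w - wh" "u - p"]] by (simp add: nbsym)
          then show "wdist2 M u S \<le> ereal (nb (wh - w)) +
            ereal (qM (u - p) - (qX (u - p) / \<alpha> - na (u - p) / (4 * \<alpha>\<^sup>2)))"
            unfolding dM by simp
        qed (use nb0 geXA in auto)
        then show "wdist2 (\<lambda>x. Bs (B x)) wh (T u) +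
          wdist2 (op_diff M XA) u (inv_img T wh) \<ge> wdist2 M u (inv_img T wh)"
          unfolding S_def[symmetric] dX
          by (simp add: wdist2_def[of "\<lambda>x. Bs (B x)"] wnorm2_def[of "\<lambda>x. Bs (B x)"] BsB wdM qXA)
      qed
    next
      case False
      then have a1: "1 \<le> \<alpha>" by simp
      show ?thesis unfolding partially_subregular_def
      proof (intro conjI base Mpos exI[of _ U1] ballI)
        show "open U1" "uh \<in> U1" using U1 by auto
        fix u assume u: "u \<in> U1"
        have "wdist2 M u S \<le> (INF w\<in>T u. ereal (nb (wh - w))) +
            (INF s\<in>S. ereal (qM (u - s) - (qX (u - s) / \<alpha> - na (u - s) / (4 * \<alpha>\<^sup>2))))"
        proof (rule L2)
          fix w s assume w: "w \<in> T u" and s: "s \<in> S"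
          have D1: "wdist2 M u S \<le> ereal (inner (B (w - wh)) (A (u - s)) + qM (u - s) - qX (u - s))"
            by (rule P1[OF u w s])
          have D2: "wdist2 M u S \<le> ereal (qM (u - s))" by (rule P0[OF s])
          show "wdist2 M u S \<le> ereal (nb (wh - w)) +
             ereal (qM (u - s) - (qX (u - s) / \<alpha> - na (u - s) / (4 * \<alpha>\<^sup>2)))"
          proof (cases "wdist2 M u S")
            case (real d)
            have h1: "d \<le> \<alpha> * nb (w - wh) + na (u - s) / (4 * \<alpha>) + qM (u - s) - qX (u - s)"
              using D1 Y[of "w - wh" "u - s"] real by simp
            have h2: "d \<le> qM (u - s)" using D2 real by simp
            show ?thesis using R1[OF a1 h1 h2] real by (simp add: nbsym)
          next
            case PInf then show ?thesis using D2 by simp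
          next
            case MInf then show ?thesis by simp
          qed
        qed (use nb0 geXA in auto)
        then show "wdist2 (\<lambda>x. Bs (B x)) wh (T u) +
          wdist2 (op_diff M XA) u (inv_img T wh) \<ge> wdist2 M u (inv_img T wh)"
          by (simp add: wdist2_def wdM qXA BsB S_def[symmetric] wnorm2_def[of "\<lambda>x. Bs (B x)"])
      qed
    qed
  qed
  show ?thesis using part1 part2 unfolding XA_def S_def by blast
qed

end
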